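(* Let $d$ be a positive square-free integer with $d\equiv 3\pmod 4$, and let $\chi_{-d}$ be the quadratic Dirichlet character of $\mathbb{Q}(\sqrt{-d})$. For a positive integer $n$ let $F(n) = n\prod_{p\mid n} \left(1+\chi_{-d}(p)p^{-1} \right)$. Let $a$ be a positive integer such that every prime dividing $a$ divides $d$. Then for every integer $r$, \[ \#\{n\ge 1:\ n\equiv r \pmod{a},\ F(n)<X\} = \frac{C}{a} X + o(X)\qquad (X\to\infty), \] where $C=\prod_{p} \left(1-p^{-1}+(p+\chi_{-d}(p))^{-1}\right)$, the product being over all primes.
   Context: $\chi_{-d}(p)=\left(\frac{-d}{p}\right)$ (Legendre symbol) for odd primes $p$, and $\chi_{-d}(2)=(-1)^{(d^2-1)/8}$. *)

theory Defs
  imports "HOL-Number_Theory.Number_Theory" "HOL-Computational_Algebra.Squarefree"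
    "HOL-Library.Landau_Symbols" "HOL-Analysis.Analysis"
begin

text \<open>The quadratic character chi_{-d} evaluated at primes p:
  Legendre symbol (-d / p) for odd p, and (-1)^((d^2-1)/8) at p = 2.\<close>
definition chi :: "int \<Rightarrow> nat \<Rightarrow> int" where
  "chi d p = (if p = 2 then (-1) ^ nat ((d^2 - 1) div 8) else Legendre (-d) (int p))"

definition Ffun :: "int \<Rightarrow> nat \<Rightarrow> real" where
  "Ffun d n = real n * (\<Prod>p\<in>prime_factors n. 1 + real_of_int (chi d p) / real p)"

definition Cconst :: "int \<Rightarrow> real" where
  "Cconst d = (\<Prod>p. if prime p then 1 - 1 / real p + 1 / (real p + real_of_int (chi d p)) else 1)"

end

theory Submission
  imports Defs
begin

definition cc :: "int \<Rightarrow> nat \<Rightarrow> real" where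
  "cc d p = 1 + real_of_int (chi d p) / real p"

lemma chi_abs: "prime p \<Longrightarrow> \<bar>chi d p\<bar> \<le> 1"
  unfolding chi_def Legendre_def by (auto simp: power_abs)

lemma chi_dvd:
  assumes "d mod 4 = 3" "prime p" "int p dvd d" shows "chi d p = 0"
proof -
  have "p \<noteq> 2"
  proof
    assume "p = 2" then have "2 dvd d" using assms(3) by simp
    then show False using assms(1) by presburger
  qed
  moreover have "[- d = 0] (mod int p)" using assms(3)
    by (simp add: cong_0_iff)
  ultimately show ?thesis unfolding chi_def Legendre_def by simp
qed

lemma cc_bounds:
  assumes "prime p"
  shows "1 - 1 / real p \<le> cc d p" "cc d p \<le> 1 + 1 / real p" "cc d p > 0"
    "cc d p \<le> real p / (real p - 1)" "1 / cc d p \<le> real p / (real p - 1)"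
proof -
  have p2: "real p \<ge> 2" using prime_ge_2_nat[OF assms] by simp
  have ch: "\<bar>real_of_int (chi d p)\<bar> \<le> 1" using chi_abs[OF assms, of d] by linarith
  have "\<bar>real_of_int (chi d p) / real p\<bar> \<le> 1 / real p"
    using ch p2 by (simp add: abs_div divide_right_mono)
  then show l: "1 - 1 / real p \<le> cc d p" and u: "cc d p \<le> 1 + 1 / real p"
    unfolding cc_def by linarith+
  have "1 / real p \<le> 1/2" using p2 by simp
  then show pos: "cc d p > 0" using l by linarith
  have "1 + 1 / real p \<le> real p / (real p - 1)"
    using p2 by (simp add: field_simps)
  then show "cc d p \<le> real p / (real p - 1)" using u by linarith
  have "1 - 1 / real p = (real p - 1) / real p" using p2 by (simp add: field_simps)
  then have "(real p - 1) / real p \<le> cc d p" using l by simp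
  then have "1 / cc d p \<le> 1 / ((real p - 1) / real p)"
    using p2 pos by (intro divide_left_mono) auto
  then show "1 / cc d p \<le> real p / (real p - 1)" by simp
qed

definition SS :: "int \<Rightarrow> nat \<Rightarrow> nat set" where
  "SS d P = {p. prime p \<and> p < P \<and> \<not> int p dvd d}"
definition HH :: "int \<Rightarrow> nat \<Rightarrow> nat \<Rightarrow> real" where
  "HH d P n = (\<Prod>p\<in>{p\<in>SS d P. p dvd n}. cc d p)"
definition LL :: "int \<Rightarrow> nat \<Rightarrow> nat \<Rightarrow> real" where
  "LL d P n = (\<Prod>p\<in>{p\<in>prime_factors n. P \<le> p}. cc d p)"
definition EE :: "nat \<Rightarrow> nat \<Rightarrow> real" where
  "EE P n = (\<Prod>p\<in>{p\<in>prime_factors n. P \<le> p}. real p / (real p - 1))"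
definition QQ :: "int \<Rightarrow> nat \<Rightarrow> nat" where
  "QQ d P = \<Prod>(SS d P)"

lemma finite_SS: "finite (SS d P)"
  by (rule finite_subset[of _ "{..<P}"]) (auto simp: SS_def)

lemma HH_pos: "HH d P n > 0"
  unfolding HH_def by (rule prod_pos) (auto simp: SS_def intro: cc_bounds)

lemma QQ_pos: "QQ d P > 0"
  unfolding QQ_def by (rule prod_pos) (auto simp: SS_def prime_gt_0_nat)

lemma SS_dvd_QQ: "p \<in> SS d P \<Longrightarrow> p dvd QQ d P"
  unfolding QQ_def using finite_SS dvd_prodI[of "SS d P" p "\<lambda>x. x"] by simp

lemma HH_mod:
  assumes "QQ d P dvd M" shows "HH d P (n mod M) = HH d P n"
proof -
  have "{p\<in>SS d P. p dvd n mod M} = {p\<in>SS d P. p dvd n}"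
    using SS_dvd_QQ dvd_trans[OF _ assms] dvd_mod_iff by blast
  then show ?thesis unfolding HH_def by simp
qed

lemma EE_ge1: "EE P n \<ge> 1"
  unfolding EE_def by (rule prod_ge_1) (auto simp: in_prime_factors_iff dest!: prime_gt_1_nat)

lemma EE_nonneg: "EE P n \<ge> 0"
  using EE_ge1[of P n] by linarith

lemma prod_split:
  assumes "d mod 4 = 3" "n > 0"
  shows "(\<Prod>p\<in>prime_factors n. cc d p) = HH d P n * LL d P n"
proof -
  let ?A = "{p\<in>prime_factors n. p < P}" and ?B = "{p\<in>prime_factors n. P \<le> p}"
  have "prime_factors n = ?A \<union> ?B" by auto
  then have "(\<Prod>p\<in>prime_factors n. cc d p) = (\<Prod>p\<in>?A. cc d p) * (\<Prod>p\<in>?B. cc d p)"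
    by (metis (no_types, lifting) finite_set_mset prod.union_disjoint
        disjoint_iff finite_Un mem_Collect_eq not_le)
  moreover have "(\<Prod>p\<in>?A. cc d p) = HH d P n"
    unfolding HH_def
  proof (rule prod.mono_neutral_right)
    show "finite ?A" by simp
    show "{p \<in> SS d P. p dvd n} \<subseteq> ?A" using assms(2) by (auto simp: SS_def in_prime_factors_iff)
    show "\<forall>i\<in>?A - {p \<in> SS d P. p dvd n}. cc d i = 1"
      using assms chi_dvd by (auto simp: SS_def in_prime_factors_iff cc_def)
  qed
  ultimately show ?thesis unfolding LL_def by simp
qed

lemma LL_le_EE: "LL d P n \<le> EE P n"
  unfolding LL_def EE_def
  by (rule prod_mono) (auto intro: less_imp_le cc_bounds)

lemma inv_LL_le_EE: "1 / LL d P n \<le> EE P n"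
proof -
  have "1 / LL d P n = (\<Prod>p\<in>{p\<in>prime_factors n. P \<le> p}. 1 / cc d p)"
    unfolding LL_def by (simp add: prod_dividef)
  also have "\<dots> \<le> EE P n" unfolding EE_def
    by (rule prod_mono) (auto intro: less_imp_le cc_bounds)
  finally show ?thesis .
qed

lemma inv_prod_le_EE: "1 / (\<Prod>p\<in>prime_factors n. cc d p) \<le> EE 2 n"
proof -
  have "1 / (\<Prod>p\<in>prime_factors n. cc d p) = (\<Prod>p\<in>prime_factors n. 1 / cc d p)"
    by (simp add: prod_dividef)
  also have "\<dots> \<le> (\<Prod>p\<in>prime_factors n. real p / (real p - 1))"
    by (rule prod_mono) (auto intro: less_imp_le cc_bounds)
  also have "\<dots> = EE 2 n" unfolding EE_def
    by (rule prod.cong) (auto simp: in_prime_factors_iff dest: prime_ge_2_nat)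
  finally show ?thesis .
qed

lemma inv_HH_le_EE:
  assumes "n > 0" shows "1 / HH d P n \<le> EE 2 n"
proof -
  have "1 / HH d P n = (\<Prod>p\<in>{p\<in>SS d P. p dvd n}. 1 / cc d p)"
    unfolding HH_def by (simp add: prod_dividef)
  also have "\<dots> \<le> (\<Prod>p\<in>{p\<in>SS d P. p dvd n}. real p / (real p - 1))"
    by (rule prod_mono) (auto simp: SS_def intro: less_imp_le cc_bounds)
  also have "\<dots> \<le> (\<Prod>p\<in>prime_factors n. real p / (real p - 1))"
  proof (rule prod_mono2)
    show "{p\<in>SS d P. p dvd n} \<subseteq> prime_factors n" using assms by (auto simp: SS_def in_prime_factors_iff)
    show "\<And>b. b \<in> prime_factors n - {p \<in> SS d P. p dvd n} \<Longrightarrow> 1 \<le> real b / (real b - 1)"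
      by (auto simp: in_prime_factors_iff dest!: prime_gt_1_nat)
    show "\<And>a. a \<in> {p \<in> SS d P. p dvd n} \<Longrightarrow> 0 \<le> real a / (real a - 1)"
      by (auto simp: SS_def dest!: prime_gt_1_nat)
  qed simp
  also have "\<dots> = EE 2 n" unfolding EE_def
    by (rule prod.cong) (auto simp: in_prime_factors_iff dest: prime_ge_2_nat)
  finally show ?thesis .
qed

definition ww :: "nat \<Rightarrow> real" where
  "ww p = (real p / (real p - 1))^2 - 1"
definition UU :: "nat \<Rightarrow> nat \<Rightarrow> nat set" where
  "UU P N = {p. prime p \<and> P \<le> p \<and> p \<le> N}"

lemma ww_nonneg: "p \<ge> 2 \<Longrightarrow> ww p \<ge> 0"
  unfolding ww_def by (simp add: field_simps)

lemma ww_le: assumes "p \<ge> 2" shows "ww p / real p \<le> 4 * (1 / (real p - 1) - 1 / real p)"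
proof -
  have p: "real p \<ge> 2" using assms by simp
  have "ww p = (2 * real p - 1) / (real p - 1)^2"
  proof -
    have nz: "real p - 1 \<noteq> 0" using p by simp
    have "(real p / (real p - 1))^2 - 1 = (real p ^ 2 - (real p - 1)^2) / (real p - 1)^2"
      using nz by (simp add: power_divide diff_divide_distrib)
    also have "real p ^ 2 - (real p - 1)^2 = 2 * real p - 1" by (simp add: power2_eq_square algebra_simps)
    finally show ?thesis unfolding ww_def .
  qed
  moreover have "4 * (1 / (real p - 1) - 1 / real p) = 4 / (real p * (real p - 1))"
    using p by (simp add: field_simps)
  moreover have "(2 * real p - 1) / (real p - 1)^2 / real p \<le> 4 / (real p * (real p - 1))"
  proof -
    have a: "(2 * real p - 1) / (real p - 1)^2 / real p = ((2 * real p - 1) / (real p - 1)) / (real p * (real p - 1))"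
      by (simp add: power2_eq_square)
    have b: "(2 * real p - 1) / (real p - 1) \<le> 4" using p by (simp add: pos_divide_le_eq)
    have c: "real p * (real p - 1) > 0" using p by simp
    show ?thesis unfolding a by (rule divide_right_mono[OF b]) (use c in simp)
  qed
  ultimately show ?thesis by simp
qed

lemma finite_UU: "finite (UU P N)"
  by (rule finite_subset[of _ "{..N}"]) (auto simp: UU_def)

lemma prod_primes_dvd:
  fixes n :: nat
  assumes "finite S" "\<forall>p\<in>S. prime p \<and> p dvd n" shows "\<Prod>S dvd n"
  using assms
proof (induction S rule: finite_induct)
  case empty then show ?case by simp
next
  case (insert p S)
  have "coprime p (\<Prod>S)"
  proof (rule prime_imp_coprime)
    show "prime p" using insert by simp
    show "\<not> p dvd \<Prod>S"
    proof
      assume "p dvd \<Prod>S"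
      then obtain q where "q \<in> S" "p dvd q" using insert prime_dvd_prod_iff[of S p "\<lambda>x. x"] by auto
      then have "p = q" using insert primes_dvd_imp_eq by auto
      then show False using insert \<open>q \<in> S\<close> by auto
    qed
  qed
  then show ?case using insert by (simp add: divides_mult)
qed

lemma EE_sq:
  "(EE P n)^2 = (\<Sum>S\<in>Pow {p\<in>prime_factors n. P \<le> p}. \<Prod>p\<in>S. ww p)"
proof -
  have "(EE P n)^2 = (\<Prod>p\<in>{p\<in>prime_factors n. P \<le> p}. ww p + 1)"
    unfolding EE_def ww_def prod_power_distrib by simp
  also have "\<dots> = (\<Sum>S\<in>Pow {p\<in>prime_factors n. P \<le> p}. \<Prod>p\<in>S. ww p)"
    by (subst prod_add) auto
  finally show ?thesis .
qed

lemma moment_general: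
  assumes A: "A \<subseteq> {1..N}" and f: "\<And>n. f n \<ge> 0" and P: "P \<ge> 2"
  shows "(\<Sum>n\<in>A. f n * (EE P n)^2)
     \<le> (\<Sum>S\<in>Pow (UU P N). (\<Prod>p\<in>S. ww p) * (\<Sum>n\<in>{n\<in>A. \<Prod>S dvd n}. f n))"
proof -
  let ?U = "UU P N"
  let ?B = "\<lambda>n. {p\<in>prime_factors n. P \<le> p}"
  have finA: "finite A" using A finite_subset by blast
  have BU: "?B n \<subseteq> ?U" if "n \<in> A" for n
    using that A by (auto simp: UU_def in_prime_factors_iff)
      (meson atLeastAtMost_iff dvd_imp_le le_trans subsetD)
  have e: "f n * (EE P n)^2 = (\<Sum>S\<in>Pow ?U. if S \<subseteq> ?B n then f n * (\<Prod>p\<in>S. ww p) else 0)"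
    if "n \<in> A" for n
  proof -
    have "{S\<in>Pow ?U. S \<subseteq> ?B n} = Pow (?B n)" using BU[OF that] by auto
    then have "(\<Sum>S\<in>Pow ?U. if S \<subseteq> ?B n then f n * (\<Prod>p\<in>S. ww p) else 0)
        = (\<Sum>S\<in>Pow (?B n). f n * (\<Prod>p\<in>S. ww p))"
      using sum.inter_filter[of "Pow ?U" "\<lambda>S. f n * (\<Prod>p\<in>S. ww p)" "\<lambda>S. S \<subseteq> ?B n"]
        finite_UU by simp
    then show ?thesis by (simp add: EE_sq sum_distrib_left)
  qed
  have "(\<Sum>n\<in>A. f n * (EE P n)^2)
      = (\<Sum>n\<in>A. \<Sum>S\<in>Pow ?U. if S \<subseteq> ?B n then f n * (\<Prod>p\<in>S. ww p) else 0)"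
    using e by simp
  also have "\<dots> = (\<Sum>S\<in>Pow ?U. \<Sum>n\<in>A. if S \<subseteq> ?B n then f n * (\<Prod>p\<in>S. ww p) else 0)"
    by (rule sum.swap)
  also have "\<dots> \<le> (\<Sum>S\<in>Pow ?U. (\<Prod>p\<in>S. ww p) * (\<Sum>n\<in>{n\<in>A. \<Prod>S dvd n}. f n))"
  proof (rule sum_mono)
    fix S assume S: "S \<in> Pow ?U"
    have W: "(\<Prod>p\<in>S. ww p) \<ge> 0"
      using S by (intro prod_nonneg ww_nonneg) (auto simp: UU_def subset_iff intro: prime_ge_2_nat)
    have "(\<Sum>n\<in>A. if S \<subseteq> ?B n then f n * (\<Prod>p\<in>S. ww p) else 0)
        = (\<Sum>n\<in>{n\<in>A. S \<subseteq> ?B n}. f n * (\<Prod>p\<in>S. ww p))"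
      using sum.inter_filter[OF finA, of "\<lambda>n. f n * (\<Prod>p\<in>S. ww p)" "\<lambda>n. S \<subseteq> ?B n"] by simp
    also have "\<dots> = (\<Prod>p\<in>S. ww p) * (\<Sum>n\<in>{n\<in>A. S \<subseteq> ?B n}. f n)"
      by (simp add: sum_distrib_left mult.commute)
    also have "\<dots> \<le> (\<Prod>p\<in>S. ww p) * (\<Sum>n\<in>{n\<in>A. \<Prod>S dvd n}. f n)"
    proof (rule mult_left_mono[OF _ W], rule sum_mono2)
      show "finite {n \<in> A. \<Prod>S dvd n}" using finA by simp
      show "{n \<in> A. S \<subseteq> ?B n} \<subseteq> {n \<in> A. \<Prod>S dvd n}"
      proof safe
        fix n assume "n \<in> A" "S \<subseteq> ?B n"
        moreover have "finite S" using S finite_UU[of P N] finite_subset by auto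
        ultimately show "\<Prod>S dvd n"
          by (intro prod_primes_dvd) (auto simp: in_prime_factors_iff)
      qed
    qed (use f in auto)
    finally show "(\<Sum>n\<in>A. if S \<subseteq> ?B n then f n * (\<Prod>p\<in>S. ww p) else 0)
        \<le> (\<Prod>p\<in>S. ww p) * (\<Sum>n\<in>{n\<in>A. \<Prod>S dvd n}. f n)" .
  qed
  finally show ?thesis .
qed

lemma telescope:
  assumes "P \<ge> 2"
  shows "(\<Sum>k\<in>{P..<P+j}. 1 / (real k - 1) - 1 / real k) = 1 / (real P - 1) - 1 / (real (P + j) - 1)"
proof (induction j)
  case 0 then show ?case by simp
next
  case (Suc j)
  have "{P..<P + Suc j} = insert (P + j) {P..<P+j}" by auto
  then show ?case using Suc by simp
qed

lemma sum_ww_le: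
  assumes "P \<ge> 2" shows "(\<Sum>p\<in>UU P N. ww p / real p) \<le> 4 / (real P - 1)"
proof -
  have "(\<Sum>p\<in>UU P N. ww p / real p) \<le> (\<Sum>p\<in>UU P N. 4 * (1 / (real p - 1) - 1 / real p))"
    by (rule sum_mono, rule ww_le) (use assms in \<open>auto simp: UU_def\<close>)
  also have "\<dots> \<le> (\<Sum>p\<in>{P..<P+N}. 4 * (1 / (real p - 1) - 1 / real p))"
  proof (rule sum_mono2)
    show "UU P N \<subseteq> {P..<P + N}" using assms by (auto simp: UU_def)
    show "\<And>b. b \<in> {P..<P + N} - UU P N \<Longrightarrow> 0 \<le> 4 * (1 / (real b - 1) - 1 / real b)"
      using assms by (auto simp: field_simps)
  qed simp
  also have "\<dots> = 4 * (1 / (real P - 1) - 1 / (real (P + N) - 1))"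
    using telescope[OF assms, of N] by (simp only: sum_distrib_left[symmetric])
  also have "\<dots> \<le> 4 / (real P - 1)" using assms by simp
  finally show ?thesis .
qed

lemma pow_sum_bound:
  assumes "P \<ge> 2"
  shows "(\<Sum>S\<in>Pow (UU P N). (\<Prod>p\<in>S. ww p) / real (\<Prod>S)) \<le> exp (4 / (real P - 1))"
proof -
  have "(\<Sum>S\<in>Pow (UU P N). (\<Prod>p\<in>S. ww p) / real (\<Prod>S))
      = (\<Sum>S\<in>Pow (UU P N). (\<Prod>p\<in>S. ww p / real p) * (\<Prod>p\<in>UU P N - S. 1))"
    by (simp add: prod_dividef)
  also have "\<dots> = (\<Prod>p\<in>UU P N. ww p / real p + 1)"
    by (rule prod_add[symmetric]) (rule finite_UU)
  also have "\<dots> \<le> (\<Prod>p\<in>UU P N. exp (ww p / real p))"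
    by (rule prod_mono) (use assms in \<open>auto simp: UU_def add.commute[of _ 1]
           intro!: add_nonneg_nonneg divide_nonneg_nonneg ww_nonneg prime_ge_2_nat\<close>)
  also have "\<dots> = exp (\<Sum>p\<in>UU P N. ww p / real p)" by (simp add: exp_sum finite_UU)
  also have "\<dots> \<le> exp (4 / (real P - 1))" using sum_ww_le[OF assms] by simp
  finally show ?thesis .
qed

lemma mult_count:
  assumes "q > 0" shows "real (card {n\<in>{1..N}. q dvd n}) \<le> real N / real q"
proof -
  have "{n\<in>{1..N}. q dvd n} \<subseteq> (\<lambda>k. q * k) ` {1..N div q}"
  proof
    fix n assume "n \<in> {n\<in>{1..N}. q dvd n}"
    then obtain k where k: "n = q * k" "1 \<le> n" "n \<le> N" by auto
    then have "k \<noteq> 0" by auto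
    then have "k \<ge> 1" by simp
    moreover have "k \<le> N div q" using k assms
      using div_le_mono[of "q*k" N q] by simp
    ultimately show "n \<in> (\<lambda>k. q * k) ` {1..N div q}" using k by auto
  qed
  then have "card {n\<in>{1..N}. q dvd n} \<le> card ((\<lambda>k. q * k) ` {1..N div q})"
    by (intro card_mono) auto
  also have "\<dots> \<le> N div q" using card_image_le[of "{1..N div q}" "\<lambda>k. q * k"] by simp
  finally have "real (card {n\<in>{1..N}. q dvd n}) \<le> real (N div q)" by simp
  also have "real (N div q) \<le> real N / real q"
  proof -
    have "q * (N div q) \<le> N" by simp
    then have "real q * real (N div q) \<le> real N" by (metis of_nat_le_iff of_nat_mult)
    then show ?thesis using assms by (simp add: field_simps)
  qed
  finally show ?thesis .
qed

lemma inv_sq_block: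
  assumes "m \<ge> 1"
  shows "(\<Sum>k\<in>{m..<m+j}. 1 / (real k)^2) \<le> 2 / real m - 2 / real (m + j)"
proof (induction j)
  case 0 then show ?case by simp
next
  case (Suc j)
  have "{m..<m + Suc j} = insert (m + j) {m..<m+j}" by auto
  moreover have "1 / (real (m+j))^2 \<le> 2 / real (m+j) - 2 / real (m + Suc j)"
  proof -
    have x: "real (m+j) \<ge> 1" using assms by simp
    have "2 / real (m+j) - 2 / real (m + Suc j) = 2 / (real (m+j) * (real (m+j) + 1))"
      using x by (simp add: field_simps)
    moreover have "1 / (real (m+j))^2 \<le> 2 / (real (m+j) * (real (m+j) + 1))"
    proof -
      define y where "y = real (m+j)"
      have y: "y \<ge> 1" using x y_def by simp
      have "1 / y^2 = (y + 1) / (y * y * (y + 1))" using y by (simp add: power2_eq_square)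
      also have "\<dots> \<le> (2 * y) / (y * y * (y + 1))"
        using y by (intro divide_right_mono) auto
      also have "(2 * y) / (y * y * (y + 1)) = (y * 2) / (y * (y * (y + 1)))" by (simp add: ac_simps)
      also have "\<dots> = 2 / (y * (y + 1))" using y by (subst mult_divide_mult_cancel_left) auto
      finally show ?thesis unfolding y_def .
    qed
    ultimately show ?thesis by simp
  qed
  ultimately show ?case using Suc by simp
qed

lemma inv_sq_tail:
  assumes t: "t > 0" and K: "finite K" "\<forall>k\<in>K. t < real k"
  shows "(\<Sum>k\<in>K. 1 / (real k)^2) \<le> 2 / t"
proof -
  define m where "m = nat \<lfloor>t\<rfloor> + 1"
  have mt: "real m > t" unfolding m_def using t by linarith
  have m1: "m \<ge> 1" unfolding m_def by simp
  obtain j0 where j0: "K \<subseteq> {..<j0}" using K(1) finite_nat_bounded by blast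
  have j: "K \<subseteq> {..<m+j0}" using j0 by auto
  have "K \<subseteq> {m..<m+j0}"
  proof
    fix k assume k: "k \<in> K"
    have "real k > t" using K k by auto
    then have "k \<ge> m" unfolding m_def using t by linarith
    then show "k \<in> {m..<m+j0}" using j k by auto
  qed
  then have "(\<Sum>k\<in>K. 1 / (real k)^2) \<le> (\<Sum>k\<in>{m..<m+j0}. 1 / (real k)^2)"
    by (intro sum_mono2) auto
  also have "\<dots> \<le> 2 / real m"
  proof -
    have "2 / real (m + j0) \<ge> 0" by simp
    then show ?thesis using inv_sq_block[OF m1, of j0] by linarith
  qed
  also have "\<dots> \<le> 2 / t" using mt t by (simp add: frac_le)
  finally show ?thesis .
qed

lemma mult_sq:
  assumes q: "q > 0" and Y: "Y > 0"
  shows "(\<Sum>n\<in>{n\<in>{n\<in>{1..N}. Y < real n}. q dvd n}. 1 / (real n)^2) \<le> 2 / (real q * Y)"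
proof -
  let ?K = "{k\<in>{1..N}. Y < real (q * k)}"
  have sub: "{n\<in>{n\<in>{1..N}. Y < real n}. q dvd n} \<subseteq> (\<lambda>k. q * k) ` ?K"
  proof
    fix n assume "n \<in> {n\<in>{n\<in>{1..N}. Y < real n}. q dvd n}"
    then obtain k where k: "n = q * k" "1 \<le> n" "n \<le> N" "Y < real n" by auto
    then have "k \<ge> 1" by (cases k) auto
    moreover have "k \<le> q * k" using q by simp
    then have "k \<le> N" using k by linarith
    ultimately show "n \<in> (\<lambda>k. q * k) ` ?K" using k by (intro image_eqI[of _ _ k]) auto
  qed
  have "(\<Sum>n\<in>{n\<in>{n\<in>{1..N}. Y < real n}. q dvd n}. 1 / (real n)^2)
      \<le> (\<Sum>n\<in>(\<lambda>k. q * k) ` ?K. 1 / (real n)^2)"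
    by (rule sum_mono2[OF _ sub]) auto
  also have "\<dots> = (\<Sum>k\<in>?K. 1 / (real (q * k))^2)"
    by (rule sum.reindex_cong[where l="\<lambda>k. q * k"]) (use q in \<open>auto simp: inj_on_def\<close>)
  also have "\<dots> = (\<Sum>k\<in>?K. 1 / (real k)^2) / (real q)^2"
    by (simp add: sum_divide_distrib power_mult_distrib mult.commute)
  also have "\<dots> \<le> (2 / (Y / real q)) / (real q)^2"
  proof (rule divide_right_mono)
    show "(\<Sum>k\<in>?K. 1 / (real k)^2) \<le> 2 / (Y / real q)"
    proof (rule inv_sq_tail)
      show "Y / real q > 0" using q Y by simp
      show "\<forall>k\<in>?K. Y / real q < real k" using q by (auto simp: field_simps)
    qed simp
  qed simp
  also have "\<dots> = 2 / (real q * Y)" using q Y by (simp add: field_simps power2_eq_square)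
  finally show ?thesis .
qed

lemma moment1:
  assumes "P \<ge> 2"
  shows "(\<Sum>n\<in>{1..N}. (EE P n)^2) \<le> real N * exp (4 / (real P - 1))"
proof -
  have "(\<Sum>n\<in>{1..N}. (EE P n)^2) = (\<Sum>n\<in>{1..N}. 1 * (EE P n)^2)" by simp
  also have "\<dots> \<le> (\<Sum>S\<in>Pow (UU P N). (\<Prod>p\<in>S. ww p) * (\<Sum>n\<in>{n\<in>{1..N}. \<Prod>S dvd n}. 1))"
    by (rule moment_general) (use assms in auto)
  also have "\<dots> \<le> (\<Sum>S\<in>Pow (UU P N). (\<Prod>p\<in>S. ww p) * (real N / real (\<Prod>S)))"
  proof (rule sum_mono)
    fix S assume S: "S \<in> Pow (UU P N)"
    have W: "(\<Prod>p\<in>S. ww p) \<ge> 0"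
      using S assms by (intro prod_nonneg ww_nonneg) (auto simp: UU_def subset_iff intro: prime_ge_2_nat)
    have q: "\<Prod>S > 0" using S by (intro prod_pos) (auto simp: UU_def prime_gt_0_nat)
    show "(\<Prod>p\<in>S. ww p) * (\<Sum>n\<in>{n\<in>{1..N}. \<Prod>S dvd n}. 1) \<le> (\<Prod>p\<in>S. ww p) * (real N / real (\<Prod>S))"
      using mult_count[OF q, of N] W by (intro mult_left_mono) auto
  qed
  also have "\<dots> = real N * (\<Sum>S\<in>Pow (UU P N). (\<Prod>p\<in>S. ww p) / real (\<Prod>S))"
    by (simp add: sum_distrib_left mult.commute)
  also have "\<dots> \<le> real N * exp (4 / (real P - 1))"
    using pow_sum_bound[OF assms] by (intro mult_left_mono) auto
  finally show ?thesis .
qed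

lemma moment2:
  assumes Y: "Y > 0"
  shows "(\<Sum>n\<in>{n\<in>{1..N}. Y < real n}. (EE 2 n)^2 / (real n)^2) \<le> 2 * exp 4 / Y"
proof -
  let ?A = "{n\<in>{1..N}. Y < real n}"
  have "(\<Sum>n\<in>?A. (EE 2 n)^2 / (real n)^2) = (\<Sum>n\<in>?A. 1 / (real n)^2 * (EE 2 n)^2)" by simp
  also have "\<dots> \<le> (\<Sum>S\<in>Pow (UU 2 N). (\<Prod>p\<in>S. ww p) * (\<Sum>n\<in>{n\<in>?A. \<Prod>S dvd n}. 1 / (real n)^2))"
    by (rule moment_general) auto
  also have "\<dots> \<le> (\<Sum>S\<in>Pow (UU 2 N). (\<Prod>p\<in>S. ww p) * (2 / (real (\<Prod>S) * Y)))"
  proof (rule sum_mono)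
    fix S assume S: "S \<in> Pow (UU 2 N)"
    have W: "(\<Prod>p\<in>S. ww p) \<ge> 0"
      using S by (intro prod_nonneg ww_nonneg) (auto simp: UU_def subset_iff intro: prime_ge_2_nat)
    have q: "\<Prod>S > 0" using S by (intro prod_pos) (auto simp: UU_def prime_gt_0_nat)
    show "(\<Prod>p\<in>S. ww p) * (\<Sum>n\<in>{n\<in>?A. \<Prod>S dvd n}. 1 / (real n)^2) \<le> (\<Prod>p\<in>S. ww p) * (2 / (real (\<Prod>S) * Y))"
      using mult_sq[OF q Y, of N] W by (intro mult_left_mono) auto
  qed
  also have "\<dots> = (2 / Y) * (\<Sum>S\<in>Pow (UU 2 N). (\<Prod>p\<in>S. ww p) / real (\<Prod>S))"
    by (simp add: sum_distrib_left field_simps)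
  also have "\<dots> \<le> (2 / Y) * exp (4 / (real (2::nat) - 1))"
    using pow_sum_bound[of 2 N] Y by (intro mult_left_mono) auto
  also have "\<dots> = 2 * exp 4 / Y" by simp
  finally show ?thesis .
qed

lemma crt_sum:
  fixes f g :: "nat \<Rightarrow> real"
  assumes cop: "coprime m n" and m: "m > 0" and n: "n > 0"
  shows "(\<Sum>t<m*n. f (t mod m) * g (t mod n)) = (\<Sum>t<m. f t) * (\<Sum>t<n. g t)"
proof -
  let ?h = "\<lambda>t. (t mod m, t mod n)"
  have inj: "inj_on ?h {..<m*n}"
  proof (rule inj_onI)
    fix s t assume s: "s \<in> {..<m*n}" and t: "t \<in> {..<m*n}" and eq: "?h s = ?h t"
    have "[s = t] (mod m)" "[s = t] (mod n)" using eq unfolding unique_euclidean_semiring_class.cong_def by auto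
    then have "[s = t] (mod m * n)" using cop by (rule coprime_cong_mult_nat)
    then show "s = t" using s t cong_less_imp_eq_nat by auto
  qed
  have sub: "?h ` {..<m*n} \<subseteq> {..<m} \<times> {..<n}" using m n by auto
  have "card (?h ` {..<m*n}) = card ({..<m} \<times> {..<n})"
    using card_image[OF inj] by (simp add: card_cartesian_product)
  then have "?h ` {..<m*n} = {..<m} \<times> {..<n}"
    using sub by (intro card_subset_eq) auto
  then have bij: "bij_betw ?h {..<m*n} ({..<m} \<times> {..<n})"
    using inj by (simp add: bij_betw_def)
  have "(\<Sum>t<m*n. f (t mod m) * g (t mod n)) = (\<Sum>t<m*n. (\<lambda>(x,y). f x * g y) (?h t))"
    by simp
  also have "\<dots> = (\<Sum>(x,y)\<in>{..<m} \<times> {..<n}. f x * g y)"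
    by (rule sum.reindex_bij_betw[OF bij])
  also have "\<dots> = (\<Sum>x<m. \<Sum>y<n. f x * g y)"
    by (rule sum.cartesian_product[symmetric])
  also have "\<dots> = (\<Sum>t<m. f t) * (\<Sum>t<n. g t)"
    by (simp add: sum_product)
  finally show ?thesis .
qed

definition HS :: "(nat \<Rightarrow> real) \<Rightarrow> nat set \<Rightarrow> nat \<Rightarrow> real" where
  "HS c S t = (\<Prod>p\<in>{p\<in>S. p dvd t}. c p)"

lemma mean_HS:
  assumes "finite S" "\<forall>p\<in>S. prime p"
  shows "(\<Sum>t<\<Prod>S. 1 / HS c S t) = (\<Prod>p\<in>S. real p - 1 + 1 / c p)"
  using assms
proof (induction S rule: finite_induct)
  case empty then show ?case by (simp add: HS_def)
next
  case (insert p S)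
  have pp: "prime p" using insert by simp
  have p0: "p > 0" using pp prime_gt_0_nat by blast
  have q0: "\<Prod>S > 0" using insert by (intro prod_pos) (auto simp: prime_gt_0_nat)
  have cop: "coprime p (\<Prod>S)"
  proof (rule prime_imp_coprime[OF pp])
    show "\<not> p dvd \<Prod>S"
    proof
      assume "p dvd \<Prod>S"
      then obtain q where "q \<in> S" "p dvd q" using insert prime_dvd_prod_iff[of S p "\<lambda>x. x"] by auto
      moreover have "prime q" using insert.prems \<open>q \<in> S\<close> by auto
      ultimately have "p = q" using pp primes_dvd_imp_eq by blast
      then show False using insert \<open>q \<in> S\<close> by auto
    qed
  qed
  define f where "f s = (if s = 0 then 1 / c p else 1)" for s :: nat
  have HSmod: "HS c S (t mod \<Prod>S) = HS c S t" for t
  proof -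
    have "{q\<in>S. q dvd t mod \<Prod>S} = {q\<in>S. q dvd t}"
      using dvd_mod_iff[of _ "\<Prod>S" t] dvd_prodI[OF insert(1), of _ "\<lambda>x. x"] by auto
    then show ?thesis unfolding HS_def by simp
  qed
  have step: "1 / HS c (insert p S) t = f (t mod p) * (1 / HS c S (t mod \<Prod>S))" for t
  proof -
    have "{q\<in>insert p S. q dvd t} = (if p dvd t then insert p {q\<in>S. q dvd t} else {q\<in>S. q dvd t})"
      by auto
    then show ?thesis unfolding HSmod using insert(1,2)
      by (auto simp: HS_def f_def dvd_eq_mod_eq_0)
  qed
  have "(\<Sum>t<\<Prod>(insert p S). 1 / HS c (insert p S) t)
      = (\<Sum>t<p * \<Prod>S. f (t mod p) * (1 / HS c S (t mod \<Prod>S)))"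
    using insert(1,2) by (simp add: step)
  also have "\<dots> = (\<Sum>t<p. f t) * (\<Sum>t<\<Prod>S. 1 / HS c S t)"
    by (rule crt_sum[OF cop p0 q0])
  also have "(\<Sum>t<p. f t) = real p - 1 + 1 / c p"
  proof -
    have "{..<p} = insert 0 {1..<p}" using p0 by auto
    then have "(\<Sum>t<p. f t) = f 0 + (\<Sum>t\<in>{1..<p}. f t)" by simp
    also have "(\<Sum>t\<in>{1..<p}. f t) = (\<Sum>t\<in>{1..<p}. 1)" by (rule sum.cong) (auto simp: f_def)
    finally show ?thesis using p0 by (simp add: f_def of_nat_diff)
  qed
  finally show ?case using insert by simp
qed

lemma count_residue:
  fixes M t :: nat and Y :: real
  assumes M: "M > 0" and t: "t < M" and Y: "Y \<ge> 0"
  shows "finite {n. 1 \<le> n \<and> n mod M = t \<and> real n < Y}"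
    "\<bar>real (card {n. 1 \<le> n \<and> n mod M = t \<and> real n < Y}) - Y / real M\<bar> \<le> 2"
proof -
  define x where "x = (Y - real t) / real M"
  define k0 where "k0 = nat \<lceil>x\<rceil>"
  have Kdef: "{k::nat. real (t + M * k) < Y} = {..<k0}"
  proof safe
    fix k assume "real (t + M * k) < Y"
    then have "real M * real k < Y - real t" by simp
    then have "real k < x" unfolding x_def using M by (simp add: pos_less_divide_eq mult.commute)
    then show "k < k0" unfolding k0_def by linarith
  next
    fix k assume "k < k0"
    then have "real k < x" unfolding k0_def
      by linarith
    then have "real k * real M < Y - real t" unfolding x_def using M by (simp add: pos_less_divide_eq)
    then show "real (t + M * k) < Y" by (simp add: mult.commute)
  qed
  have A: "{n. n mod M = t \<and> real n < Y} = (\<lambda>k. t + M * k) ` {k::nat. real (t + M * k) < Y}"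
  proof safe
    fix n assume n: "real n < Y" "t = n mod M"
    have e0: "real (n mod M + M * (n div M)) = real n" by simp
    have e: "real (n mod M) + real M * real (n div M) = real n"
      using e0 by (simp only: of_nat_add of_nat_mult)
    show "n \<in> (\<lambda>k. n mod M + M * k) ` {k. real (n mod M + M * k) < Y}"
      using n e by (intro image_eqI[of _ _ "n div M"]) auto
  qed (use t in auto)
  have inj: "inj (\<lambda>k. t + M * k)" using M by (auto simp: inj_def)
  have cardA: "card {n. n mod M = t \<and> real n < Y} = k0"
    unfolding A Kdef by (subst card_image) (auto intro: inj_on_subset[OF inj])
  have finA: "finite {n. n mod M = t \<and> real n < Y}" unfolding A Kdef by simp
  have sub: "{n. 1 \<le> n \<and> n mod M = t \<and> real n < Y} \<subseteq> {n. n mod M = t \<and> real n < Y}" by auto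
  show fin: "finite {n. 1 \<le> n \<and> n mod M = t \<and> real n < Y}" using finite_subset[OF sub finA] .
  have sub2: "{n. n mod M = t \<and> real n < Y} \<subseteq> insert 0 {n. 1 \<le> n \<and> n mod M = t \<and> real n < Y}" by auto
  have c1: "card {n. 1 \<le> n \<and> n mod M = t \<and> real n < Y} \<le> k0"
    using card_mono[OF finA sub] cardA by simp
  have c2: "k0 \<le> card {n. 1 \<le> n \<and> n mod M = t \<and> real n < Y} + 1"
  proof -
    have "k0 \<le> card (insert 0 {n. 1 \<le> n \<and> n mod M = t \<and> real n < Y})"
      using card_mono[OF _ sub2] fin cardA by simp
    also have "\<dots> \<le> card {n. 1 \<le> n \<and> n mod M = t \<and> real n < Y} + 1"
      using fin by (simp add: card_insert_if)
    finally show ?thesis .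
  qed
  have xe: "x = Y / real M - real t / real M" unfolding x_def by (simp add: diff_divide_distrib)
  have tm: "real t / real M < 1" "real t / real M \<ge> 0" using t M by auto
  have xr: "x \<le> Y / real M" "x > Y / real M - 1" using xe tm by linarith+
  have k0a: "real k0 \<ge> x" unfolding k0_def by linarith
  have k0b: "real k0 \<le> max 0 x + 1" unfolding k0_def by linarith
  have Ym: "Y / real M \<ge> 0" using Y M by simp
  show "\<bar>real (card {n. 1 \<le> n \<and> n mod M = t \<and> real n < Y}) - Y / real M\<bar> \<le> 2"
  proof -
    have r1: "real (card {n. 1 \<le> n \<and> n mod M = t \<and> real n < Y}) \<le> real k0" using c1 by simp
    have r2: "real k0 \<le> real (card {n. 1 \<le> n \<and> n mod M = t \<and> real n < Y}) + 1"
      using c2 by (metis of_nat_1 of_nat_add of_nat_le_iff)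
    show ?thesis using r1 r2 xr k0a k0b Ym by linarith
  qed
qed

definition MP :: "int \<Rightarrow> nat \<Rightarrow> real" where
  "MP d P = (\<Prod>p\<in>SS d P. 1 - 1 / real p + 1 / (real p + real_of_int (chi d p)))"

lemma coprime_a_QQ:
  assumes "\<forall>p::nat. prime p \<and> p dvd a \<longrightarrow> int p dvd d"
  shows "coprime a (QQ d P)"
  unfolding QQ_def
proof (rule prod_coprime_right)
  fix p assume p: "p \<in> SS d P"
  then have "prime p" "\<not> p dvd a" using assms by (auto simp: SS_def)
  then show "coprime a p" using prime_imp_coprime coprime_commute by blast
qed

lemma mean_HH: "(\<Sum>t<QQ d P. 1 / HH d P t) = real (QQ d P) * MP d P"
proof -
  have "(\<Sum>t<QQ d P. 1 / HH d P t) = (\<Prod>p\<in>SS d P. real p - 1 + 1 / cc d p)"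
    unfolding QQ_def HH_def using mean_HS[OF finite_SS, of d P "cc d"]
    by (simp add: HS_def SS_def)
  also have "\<dots> = (\<Prod>p\<in>SS d P. real p * (1 - 1 / real p + 1 / (real p + real_of_int (chi d p))))"
  proof (rule prod.cong)
    fix p assume "p \<in> SS d P"
    then have p: "real p \<ge> 2" by (auto simp: SS_def dest: prime_ge_2_nat)
    have "real p * cc d p = real p + real_of_int (chi d p)" unfolding cc_def using p
      by (simp add: distrib_left)
    then have "1 / cc d p = real p * (1 / (real p + real_of_int (chi d p)))"
    proof -
      have "cc d p > 0" using \<open>p \<in> SS d P\<close> by (auto simp: SS_def intro: cc_bounds)
      then have "1 / cc d p = real p / (real p * cc d p)" using p by simp
      also have "\<dots> = real p * (1 / (real p + real_of_int (chi d p)))"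
        using \<open>real p * cc d p = _\<close> by simp
      finally show ?thesis .
    qed
    then show "real p - 1 + 1 / cc d p = real p * (1 - 1 / real p + 1 / (real p + real_of_int (chi d p)))"
      using p by (simp add: algebra_simps)
  qed simp
  also have "\<dots> = real (QQ d P) * MP d P"
    unfolding QQ_def MP_def by (simp add: prod.distrib)
  finally show ?thesis .
qed

definition MS :: "int \<Rightarrow> nat \<Rightarrow> nat \<Rightarrow> nat \<Rightarrow> real \<Rightarrow> nat set" where
  "MS d P a r' Y = {n. 1 \<le> n \<and> n mod a = r' \<and> real n * HH d P n < Y}"

lemma main_count:
  assumes a: "a > 0" and ha: "\<forall>p::nat. prime p \<and> p dvd a \<longrightarrow> int p dvd d"
    and r': "r' < a" and Y: "Y \<ge> 0"
  shows "finite (MS d P a r' Y)"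
    "\<bar>real (card (MS d P a r' Y)) - Y * MP d P / real a\<bar> \<le> 2 * real a * real (QQ d P)"
proof -
  let ?Q = "QQ d P"
  define M where "M = a * ?Q"
  have Q0: "?Q > 0" by (rule QQ_pos)
  have M0: "M > 0" unfolding M_def using a Q0 by simp
  define T where "T = {t\<in>{..<M}. t mod a = r'}"
  define B where "B t = {n. 1 \<le> n \<and> n mod M = t \<and> real n < Y / HH d P t}" for t
  have HHM: "HH d P (n mod M) = HH d P n" for n
    by (rule HH_mod) (simp add: M_def)
  have amod: "n mod M mod a = n mod a" for n unfolding M_def by (simp add: mod_mod_cancel)
  have eqU: "MS d P a r' Y = (\<Union>t\<in>T. B t)"
  proof safe
    fix n assume n: "n \<in> MS d P a r' Y"
    have "real n < Y / HH d P (n mod M)" unfolding HHM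
      using n HH_pos[of d P n] by (simp add: MS_def pos_less_divide_eq)
    then show "n \<in> (\<Union>t\<in>T. B t)" using n M0 amod
      by (auto simp: T_def B_def MS_def intro!: bexI[of _ "n mod M"])
  next
    fix n t assume t: "t \<in> T" and n: "n \<in> B t"
    then have "t = n mod M" by (simp add: B_def)
    then show "n \<in> MS d P a r' Y" using t n amod HH_pos[of d P n] HHM[of n]
      by (auto simp: T_def B_def MS_def pos_less_divide_eq)
  qed
  have finT: "finite T" unfolding T_def by simp
  have Bc: "finite (B t) \<and> \<bar>real (card (B t)) - (Y / HH d P t) / real M\<bar> \<le> 2" if "t \<in> T" for t
  proof -
    have tM: "t < M" using that by (simp add: T_def)
    have Y': "Y / HH d P t \<ge> 0" using Y HH_pos[of d P t] by simp
    show ?thesis unfolding B_def using count_residue[OF M0 tM Y'] by simp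
  qed
  have disj: "\<forall>i\<in>T. \<forall>j\<in>T. i \<noteq> j \<longrightarrow> B i \<inter> B j = {}" by (auto simp: B_def)
  have cardU: "card (MS d P a r' Y) = (\<Sum>t\<in>T. card (B t))"
    unfolding eqU using Bc disj finT by (intro card_UN_disjoint) auto
  show "finite (MS d P a r' Y)" unfolding eqU using Bc finT by auto
  have sumT: "(\<Sum>t\<in>T. 1 / HH d P t) = real ?Q * MP d P"
  proof -
    have "(\<Sum>t\<in>T. 1 / HH d P t) = (\<Sum>t<M. if t mod a = r' then 1 / HH d P t else 0)"
      unfolding T_def by (rule sum.inter_filter) simp
    also have "\<dots> = (\<Sum>t<a * ?Q. (if t mod a = r' then 1 else 0) * (1 / HH d P (t mod ?Q)))"
      unfolding M_def by (intro sum.cong) (auto simp: HH_mod)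
    also have "\<dots> = (\<Sum>s<a. if s = r' then 1 else 0) * (\<Sum>t<?Q. 1 / HH d P t)"
      by (rule crt_sum[OF coprime_a_QQ[OF ha] a Q0])
    also have "(\<Sum>s<a. if s = r' then 1 else (0::real)) = 1" using r' by simp
    finally show ?thesis using mean_HH by simp
  qed
  have "\<bar>real (card (MS d P a r' Y)) - (\<Sum>t\<in>T. (Y / HH d P t) / real M)\<bar>
      = \<bar>\<Sum>t\<in>T. real (card (B t)) - (Y / HH d P t) / real M\<bar>"
    unfolding cardU by (simp add: sum_subtractf)
  also have "\<dots> \<le> (\<Sum>t\<in>T. \<bar>real (card (B t)) - (Y / HH d P t) / real M\<bar>)" by (rule sum_abs)
  also have "\<dots> \<le> (\<Sum>t\<in>T. 2)" using Bc by (intro sum_mono) auto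
  also have "\<dots> = 2 * real (card T)" by simp
  also have "\<dots> \<le> 2 * real M"
  proof -
    have "card T \<le> card {..<M}" unfolding T_def by (intro card_mono) auto
    then show ?thesis by simp
  qed
  finally have est: "\<bar>real (card (MS d P a r' Y)) - (\<Sum>t\<in>T. (Y / HH d P t) / real M)\<bar> \<le> 2 * real M" .
  have "(\<Sum>t\<in>T. (Y / HH d P t) / real M) = Y / real M * (\<Sum>t\<in>T. 1 / HH d P t)"
    by (simp add: sum_distrib_left mult.commute)
  also have "\<dots> = Y * MP d P / real a" unfolding sumT M_def using Q0 a by simp
  finally show "\<bar>real (card (MS d P a r' Y)) - Y * MP d P / real a\<bar> \<le> 2 * real a * real ?Q"
    using est unfolding M_def by simp
qed

definition fC :: "int \<Rightarrow> nat \<Rightarrow> real" where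
  "fC d p = (if prime p then 1 - 1 / real p + 1 / (real p + real_of_int (chi d p)) else 1)"

lemma Cconst_fC: "Cconst d = prodinf (fC d)"
  unfolding Cconst_def fC_def by simp

lemma fC_bound: "norm (fC d n - 1) \<le> 2 * inverse (real n ^ 2)"
proof (cases "prime n")
  case False then show ?thesis by (simp add: fC_def)
next
  case True
  have p: "real n \<ge> 2" using prime_ge_2_nat[OF True] by simp
  have ch: "chi d n = -1 \<or> chi d n = 0 \<or> chi d n = 1" using chi_abs[OF True, of d] by auto
  have e: "fC d n - 1 = 1 / (real n + real_of_int (chi d n)) - 1 / real n"
    using True by (simp add: fC_def)
  have b1: "\<bar>1 / (real n - 1) - 1 / real n\<bar> \<le> 2 * inverse (real n ^ 2)"
  proof -
    have "1 / (real n - 1) - 1 / real n = 1 / (real n * (real n - 1))" using p by (simp add: field_simps)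
    moreover have "1 / (real n * (real n - 1)) \<le> 2 / (real n * real n)"
      using p by (simp add: field_simps)
    moreover have "1 / (real n * (real n - 1)) \<ge> 0" using p by simp
    ultimately show ?thesis by (simp add: power2_eq_square divide_inverse)
  qed
  have b2: "\<bar>1 / (real n + 1) - 1 / real n\<bar> \<le> 2 * inverse (real n ^ 2)"
  proof -
    have eq: "1 / real n - 1 / (real n + 1) = 1 / (real n * (real n + 1))" using p by (simp add: field_simps)
    have le: "1 / (real n * (real n + 1)) \<le> 2 / (real n * real n)"
      using p by (intro frac_le) (auto intro: mult_left_mono)
    have nn: "1 / (real n * (real n + 1)) \<ge> 0" using p by simp
    have "\<bar>1 / (real n + 1) - 1 / real n\<bar> = 1 / (real n * (real n + 1))"
      by (subst abs_minus_commute) (simp only: eq abs_of_nonneg[OF nn])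
    also have "\<dots> \<le> 2 / (real n * real n)" by (rule le)
    also have "\<dots> = 2 * inverse (real n ^ 2)" by (simp add: power2_eq_square divide_inverse)
    finally show ?thesis .
  qed
  show ?thesis using ch
  proof (elim disjE)
    assume "chi d n = -1" then show ?thesis using e b1 by simp
  next
    assume "chi d n = 0" then show ?thesis using e by simp
  next
    assume "chi d n = 1" then show ?thesis using e b2 by simp
  qed
qed

lemma fC_convergent: "convergent_prod (fC d)"
proof (rule abs_convergent_prod_imp_convergent_prod)
  show "abs_convergent_prod (fC d)"
    unfolding abs_convergent_prod_conv_summable
  proof (rule summable_comparison_test')
    show "summable (\<lambda>n. 2 * inverse (real n ^ 2))"
      by (intro summable_mult inverse_power_summable) simp
    show "\<And>n. n \<ge> 0 \<Longrightarrow> norm (norm (fC d n - 1)) \<le> 2 * inverse (real n ^ 2)"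
      using fC_bound by simp
  qed
qed

lemma MP_eq:
  assumes "d mod 4 = 3"
  shows "MP d P = (\<Prod>k<P. fC d k)"
proof -
  have "(\<Prod>k<P. fC d k) = (\<Prod>k\<in>SS d P. fC d k)"
  proof (rule prod.mono_neutral_right)
    show "SS d P \<subseteq> {..<P}" by (auto simp: SS_def)
    show "\<forall>i\<in>{..<P} - SS d P. fC d i = 1"
      using assms chi_dvd by (auto simp: SS_def fC_def)
  qed simp
  also have "\<dots> = MP d P" unfolding MP_def by (rule prod.cong) (auto simp: SS_def fC_def)
  finally show ?thesis by simp
qed

lemma MP_lim:
  assumes "d mod 4 = 3"
  shows "(\<lambda>P. MP d P) \<longlonglongrightarrow> Cconst d"
proof -
  have "(\<lambda>n. \<Prod>i\<le>n. fC d i) \<longlonglongrightarrow> Cconst d"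
    unfolding Cconst_fC by (rule convergent_prod_LIMSEQ[OF fC_convergent])
  moreover have "(\<Prod>i\<le>n. fC d i) = MP d (Suc n)" for n
    using MP_eq[OF assms, of "Suc n"] lessThan_Suc_atMost by simp
  ultimately have "(\<lambda>n. MP d (Suc n)) \<longlonglongrightarrow> Cconst d" by simp
  then show ?thesis by (rule LIMSEQ_imp_Suc)
qed

lemma bad_bound:
  assumes P: "P \<ge> 2" and eta: "\<eta> > 0" and Z: "Z \<ge> 0"
  shows "real (card {n\<in>{1..nat \<lfloor>Z\<rfloor>}. 1 + \<eta> < EE P n}) \<le> Z * (exp (4 / (real P - 1)) - 1) / (2 * \<eta>)"
proof -
  define N where "N = nat \<lfloor>Z\<rfloor>"
  define Bd where "Bd = {n\<in>{1..N}. 1 + \<eta> < EE P n}"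
  define e where "e = exp (4 / (real P - 1))"
  have e1: "e \<ge> 1" unfolding e_def using P by simp
  have NZ: "real N \<le> Z" unfolding N_def using Z by linarith
  have "real (card Bd) * (2 * \<eta>) = (\<Sum>n\<in>Bd. 2 * \<eta>)" by simp
  also have "\<dots> \<le> (\<Sum>n\<in>Bd. (EE P n)^2 - 1)"
  proof (rule sum_mono)
    fix n assume "n \<in> Bd"
    then have h: "1 + \<eta> < EE P n" by (simp add: Bd_def)
    have "(1 + \<eta>)^2 \<le> (EE P n)^2" using h eta by (intro power_mono) auto
    moreover have "(1 + \<eta>)^2 = 1 + 2 * \<eta> + \<eta> * \<eta>" by (simp add: power2_eq_square algebra_simps)
    moreover have "\<eta> * \<eta> \<ge> 0" by simp
    ultimately show "2 * \<eta> \<le> (EE P n)^2 - 1" by linarith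
  qed
  also have "\<dots> \<le> (\<Sum>n\<in>{1..N}. (EE P n)^2 - 1)"
  proof (rule sum_mono2)
    show "Bd \<subseteq> {1..N}" by (auto simp: Bd_def)
    show "\<And>b. b \<in> {1..N} - Bd \<Longrightarrow> 0 \<le> (EE P b)^2 - 1"
      using EE_ge1 by (simp add: one_le_power)
  qed simp
  also have "\<dots> = (\<Sum>n\<in>{1..N}. (EE P n)^2) - real N" by (simp add: sum_subtractf)
  also have "\<dots> \<le> real N * e - real N" using moment1[OF P, of N] by (simp add: e_def)
  also have "\<dots> = real N * (e - 1)" by (simp add: algebra_simps)
  also have "\<dots> \<le> Z * (e - 1)" using NZ e1 by (intro mult_right_mono) auto
  finally have "real (card Bd) * (2 * \<eta>) \<le> Z * (e - 1)" .
  then show ?thesis using eta unfolding Bd_def N_def e_def by (simp add: pos_le_divide_eq)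
qed

lemma fin_bound:
  fixes S :: "nat set"
  assumes h: "\<And>N. real (card (S \<inter> {..N})) \<le> b"
  shows "finite S" "real (card S) \<le> b"
proof -
  show fin: "finite S"
  proof (rule ccontr)
    assume "infinite S"
    then obtain B where B: "B \<subseteq> S" "finite B" "card B = nat \<lceil>b\<rceil> + 1"
      using infinite_arbitrarily_large by blast
    then have "B \<noteq> {}" by auto
    then have "B \<subseteq> S \<inter> {..Max B}" using B by auto
    then have "card B \<le> card (S \<inter> {..Max B})" by (intro card_mono) auto
    then have "real (card B) \<le> b" using h[of "Max B"] by linarith
    then show False using B(3) by linarith
  qed
  obtain k where "S \<subseteq> {..<k}" using fin finite_nat_bounded by blast
  then have "S \<inter> {..k} = S" by auto
  then show "real (card S) \<le> b" using h[of k] by simp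
qed

lemma tail_bound:
  assumes K: "K > 0" and X: "X > 0"
  shows "finite {n. 1 \<le> n \<and> K * X < real n \<and> real n < X * EE 2 n}"
    "real (card {n. 1 \<le> n \<and> K * X < real n \<and> real n < X * EE 2 n}) \<le> 2 * exp 4 * X / K"
proof -
  define T where "T = {n. 1 \<le> n \<and> K * X < real n \<and> real n < X * EE 2 n}"
  have b: "real (card (T \<inter> {..N})) \<le> 2 * exp 4 * X / K" for N
  proof -
    let ?A = "{n\<in>{1..N}. K * X < real n}"
    have sub: "T \<inter> {..N} \<subseteq> ?A" by (auto simp: T_def)
    have "real (card (T \<inter> {..N})) = (\<Sum>n\<in>T \<inter> {..N}. 1)" by simp
    also have "\<dots> \<le> (\<Sum>n\<in>T \<inter> {..N}. X^2 * ((EE 2 n)^2 / (real n)^2))"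
    proof (rule sum_mono)
      fix n assume n: "n \<in> T \<inter> {..N}"
      then have n1: "real n \<ge> 1" and lt: "real n < X * EE 2 n" by (auto simp: T_def)
      have "(real n)^2 \<le> (X * EE 2 n)^2" using n1 lt by (intro power_mono) auto
      then have "(real n)^2 \<le> X^2 * (EE 2 n)^2" by (simp add: power_mult_distrib)
      then show "1 \<le> X^2 * ((EE 2 n)^2 / (real n)^2)" using n1 by (simp add: field_simps)
    qed
    also have "\<dots> \<le> (\<Sum>n\<in>?A. X^2 * ((EE 2 n)^2 / (real n)^2))"
      by (rule sum_mono2[OF _ sub]) auto
    also have "\<dots> = X^2 * (\<Sum>n\<in>?A. (EE 2 n)^2 / (real n)^2)" by (simp add: sum_distrib_left)
    also have "\<dots> \<le> X^2 * (2 * exp 4 / (K * X))"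
      using moment2[of "K * X" N] K X by (intro mult_left_mono) auto
    also have "\<dots> = 2 * exp 4 * X / K" using K X by (simp add: field_simps power2_eq_square)
    finally show ?thesis .
  qed
  show "finite T" "real (card T) \<le> 2 * exp 4 * X / K" using fin_bound[OF b] by auto
qed

lemma LL_pos: "LL d P n > 0"
  unfolding LL_def by (rule prod_pos) (auto simp: in_prime_factors_iff intro: cc_bounds)

lemma Ffun_split: "d mod 4 = 3 \<Longrightarrow> n \<ge> 1 \<Longrightarrow> Ffun d n = real n * (HH d P n * LL d P n)"
  unfolding Ffun_def using prod_split[of d n P] by (simp add: cc_def)

lemma upper_incl:
  assumes d: "d mod 4 = 3" and eta: "\<eta> > 0" and X: "X > 0"
  shows "{n. 1 \<le> n \<and> n mod a = r' \<and> Ffun d n < X}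
    \<subseteq> MS d P a r' ((1 + \<eta>) * X) \<union> {n\<in>{1..nat \<lfloor>K * X\<rfloor>}. 1 + \<eta> < EE P n}
      \<union> {n. 1 \<le> n \<and> K * X < real n \<and> real n < X * EE 2 n}"
proof
  fix n assume n: "n \<in> {n. 1 \<le> n \<and> n mod a = r' \<and> Ffun d n < X}"
  define H where "H = HH d P n"
  define L where "L = LL d P n"
  have H: "H > 0" and L: "L > 0" unfolding H_def L_def by (rule HH_pos, rule LL_pos)
  have n1: "n \<ge> 1" and nm: "n mod a = r'" and F: "real n * (H * L) < X"
    using n Ffun_split[OF d, of n P] by (auto simp: H_def L_def)
  have rn: "real n > 0" using n1 by simp
  show "n \<in> MS d P a r' ((1 + \<eta>) * X) \<union> {n\<in>{1..nat \<lfloor>K * X\<rfloor>}. 1 + \<eta> < EE P n}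
      \<union> {n. 1 \<le> n \<and> K * X < real n \<and> real n < X * EE 2 n}"
  proof (cases "L * (1 + \<eta>) \<ge> 1")
    case True
    have "real n * H = real n * H * 1" by simp
    also have "\<dots> \<le> real n * H * (L * (1 + \<eta>))" using True rn H by (intro mult_left_mono) auto
    also have "\<dots> = (real n * (H * L)) * (1 + \<eta>)" by (simp add: algebra_simps)
    also have "\<dots> < X * (1 + \<eta>)" using F eta by (intro mult_strict_right_mono) auto
    finally have "real n * HH d P n < (1 + \<eta>) * X" by (simp add: H_def mult.commute)
    then show ?thesis using n1 nm by (simp add: MS_def)
  next
    case False
    then have "1 / L > 1 + \<eta>" using L eta by (simp add: field_simps)
    then have E: "EE P n > 1 + \<eta>" using inv_LL_le_EE[of d P n] unfolding L_def by linarith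
    show ?thesis
    proof (cases "real n \<le> K * X")
      case True
      then have "n \<le> nat \<lfloor>K * X\<rfloor>" by linarith
      then show ?thesis using E n1 by auto
    next
      case False
      have "1 / (H * L) \<le> EE 2 n"
        using inv_prod_le_EE[of d n] prod_split[OF d, of n P] n1 by (simp add: H_def L_def)
      moreover have "real n < X * (1 / (H * L))" using F H L by (simp add: field_simps)
      ultimately have "real n < X * EE 2 n" using X
        by (meson less_le_trans mult_left_mono less_imp_le)
      then show ?thesis using False n1 by auto
    qed
  qed
qed

lemma lower_incl:
  assumes d: "d mod 4 = 3" and eta: "\<eta> > 0" and X: "X > 0"
  shows "MS d P a r' (X / (1 + \<eta>)) \<subseteq> {n. 1 \<le> n \<and> n mod a = r' \<and> Ffun d n < X}
      \<union> {n\<in>{1..nat \<lfloor>K * X\<rfloor>}. 1 + \<eta> < EE P n}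
      \<union> {n. 1 \<le> n \<and> K * X < real n \<and> real n < X * EE 2 n}"
proof
  fix n assume n: "n \<in> MS d P a r' (X / (1 + \<eta>))"
  define H where "H = HH d P n"
  define L where "L = LL d P n"
  have H: "H > 0" and L: "L > 0" unfolding H_def L_def by (rule HH_pos, rule LL_pos)
  have n1: "n \<ge> 1" and nm: "n mod a = r'" and M: "real n * H < X / (1 + \<eta>)"
    using n by (auto simp: MS_def H_def)
  have rn: "real n > 0" using n1 by simp
  have M': "real n * H * (1 + \<eta>) < X" using M eta by (simp add: field_simps)
  show "n \<in> {n. 1 \<le> n \<and> n mod a = r' \<and> Ffun d n < X}
      \<union> {n\<in>{1..nat \<lfloor>K * X\<rfloor>}. 1 + \<eta> < EE P n}
      \<union> {n. 1 \<le> n \<and> K * X < real n \<and> real n < X * EE 2 n}"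
  proof (cases "L \<le> 1 + \<eta>")
    case True
    have "Ffun d n = real n * H * L" using Ffun_split[OF d n1, of P] by (simp add: H_def L_def)
    also have "\<dots> \<le> real n * H * (1 + \<eta>)" using True rn H by (intro mult_left_mono) auto
    also have "\<dots> < X" by (rule M')
    finally show ?thesis using n1 nm by simp
  next
    case False
    then have E: "EE P n > 1 + \<eta>" using LL_le_EE[of d P n] unfolding L_def by linarith
    show ?thesis
    proof (cases "real n \<le> K * X")
      case True
      then have "n \<le> nat \<lfloor>K * X\<rfloor>" by linarith
      then show ?thesis using E n1 by auto
    next
      case False
      have "real n * H < X" using M' rn H eta
        by (smt (verit) mult_le_cancel_left1 mult_pos_pos)
      then have "real n < X * (1 / H)" using H by (simp add: field_simps)
      moreover have "1 / H \<le> EE 2 n" using inv_HH_le_EE[of n d P] n1 by (simp add: H_def)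
      ultimately have "real n < X * EE 2 n" using X
        by (meson less_le_trans mult_left_mono less_imp_le)
      then show ?thesis using False n1 by auto
    qed
  qed
qed

lemma cong_iff_mod:
  assumes "a > 0"
  shows "[int n = r] (mod int a) \<longleftrightarrow> n mod a = nat (r mod int a)"
proof -
  have "[int n = r] (mod int a) \<longleftrightarrow> int n mod int a = r mod int a"
    by (simp add: unique_euclidean_semiring_class.cong_def)
  also have "\<dots> \<longleftrightarrow> int (n mod a) = r mod int a" by (simp add: zmod_int)
  also have "\<dots> \<longleftrightarrow> n mod a = nat (r mod int a)" using assms by auto
  finally show ?thesis .
qed

lemma choose_P:
  assumes d: "d mod 4 = 3" and \<delta>: "\<delta> > 0" and \<theta>: "\<theta> > 0"
  obtains P where "P \<ge> 2" "\<bar>MP d P - Cconst d\<bar> \<le> \<delta>" "exp (4 / (real P - 1)) - 1 \<le> \<theta>"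
proof -
  obtain no where no: "\<And>n. n \<ge> no \<Longrightarrow> norm (MP d n - Cconst d) < \<delta>"
    using LIMSEQ_D[OF MP_lim[OF d] \<delta>] by blast
  define P where "P = max (max no 9) (nat \<lceil>1 + 8 / \<theta>\<rceil>)"
  have P9: "real P \<ge> 9" unfolding P_def by simp
  have Pt: "real P \<ge> 1 + 8 / \<theta>" unfolding P_def by linarith
  have "no \<le> P" unfolding P_def by simp
  then have "\<bar>MP d P - Cconst d\<bar> \<le> \<delta>" using no[of P] by simp
  moreover have "exp (4 / (real P - 1)) - 1 \<le> \<theta>"
  proof -
    define x where "x = 4 / (real P - 1)"
    have x0: "x \<ge> 0" unfolding x_def using P9 by simp
    have xh: "x \<le> 1/2" unfolding x_def using P9 by (simp add: divide_le_eq)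
    have "norm (exp x) \<le> 1 + 2 * norm x" using xh x0 by (intro exp_bound_lemma) simp
    then have ex: "exp x \<le> 1 + 2 * x" using x0 by simp
    have "real P - 1 \<ge> 8 / \<theta>" using Pt by simp
    then have "8 \<le> (real P - 1) * \<theta>" using \<theta> by (simp add: pos_divide_le_eq)
    then have "8 / (real P - 1) \<le> \<theta>" using P9 by (simp add: pos_divide_le_eq mult.commute)
    moreover have "2 * x = 8 / (real P - 1)" unfolding x_def by simp
    ultimately show ?thesis using ex unfolding x_def by linarith
  qed
  moreover have "P \<ge> 2" unfolding P_def by simp
  ultimately show ?thesis using that by blast
qed

theorem lemma3p8:
  fixes d :: int and a :: nat and r :: int
  assumes "d > 0" and "squarefree d" and "d mod 4 = 3"
    and "a > 0" and "\<forall>p::nat. prime p \<and> p dvd a \<longrightarrow> int p dvd d"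
  shows "(\<lambda>X::real. real (card {n::nat. n \<ge> 1 \<and> [int n = r] (mod int a) \<and> Ffun d n < X})
            - Cconst d / real a * X) \<in> o(\<lambda>X. X)"
proof -
  note d = assms(3) and a = assms(4) and ha = assms(5)
  define r' where "r' = nat (r mod int a)"
  have r': "r' < a" unfolding r'_def using a
    by (metis nat_less_iff of_nat_0_less_iff pos_mod_bound pos_mod_sign)
  define AS where "AS X = {n. 1 \<le> n \<and> n mod a = r' \<and> Ffun d n < X}" for X
  have setEq: "{n::nat. n \<ge> 1 \<and> [int n = r] (mod int a) \<and> Ffun d n < X} = AS X" for X
    unfolding AS_def r'_def using cong_iff_mod[OF a] by auto
  define C where "C = Cconst d"
  show ?thesis unfolding setEq
  proof (rule landau_o.smallI)
    fix \<epsilon> :: real assume \<epsilon>: "\<epsilon> > 0"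
    define B0 where "B0 = \<bar>C\<bar> + 1"
    have B0: "B0 > 0" "B0 \<ge> 1" unfolding B0_def by auto
    have ra: "real a > 0" using a by simp
    define \<delta> where "\<delta> = min 1 (\<epsilon> * real a / 4)"
    define \<eta> where "\<eta> = min 1 (\<epsilon> * real a / (4 * B0))"
    define K where "K = 8 * exp 4 / \<epsilon>"
    define \<theta> where "\<theta> = \<eta> * \<epsilon> / (4 * K)"
    have \<delta>0: "\<delta> > 0" "\<delta> \<le> 1" "\<delta> \<le> \<epsilon> * real a / 4" unfolding \<delta>_def using \<epsilon> ra by auto
    have \<eta>0: "\<eta> > 0" "\<eta> \<le> 1" "\<eta> \<le> \<epsilon> * real a / (4 * B0)" unfolding \<eta>_def using \<epsilon> ra B0 by auto
    have K0: "K > 0" unfolding K_def using \<epsilon> by simp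
    have \<theta>0: "\<theta> > 0" unfolding \<theta>_def using \<eta>0 \<epsilon> K0 by simp
    obtain P where P2: "P \<ge> 2" and PC: "\<bar>MP d P - C\<bar> \<le> \<delta>" and Pe: "exp (4 / (real P - 1)) - 1 \<le> \<theta>"
      using choose_P[OF d \<delta>0(1) \<theta>0] unfolding C_def by blast
    define m where "m = MP d P"
    define Q where "Q = QQ d P"
    have mB: "\<bar>m\<bar> \<le> B0" using PC \<delta>0 unfolding m_def B0_def by linarith
    have s1: "(1 + \<eta>) * m \<le> C + (\<delta> + \<eta> * B0)"
    proof -
      have "\<eta> * m \<le> \<eta> * B0" using mB \<eta>0 by (intro mult_left_mono) auto
      then show ?thesis using PC unfolding m_def by (simp add: algebra_simps)
    qed
    have s2: "m / (1 + \<eta>) \<ge> C - (\<delta> + \<eta> * B0)"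
    proof -
      have "m - m / (1 + \<eta>) = \<eta> * m / (1 + \<eta>)" using \<eta>0 by (simp add: field_simps)
      also have "\<dots> \<le> \<eta> * \<bar>m\<bar> / (1 + \<eta>)"
        using \<eta>0 by (intro divide_right_mono mult_left_mono) auto
      also have "\<dots> \<le> \<eta> * \<bar>m\<bar>"
      proof -
        have "0 \<le> \<eta> * \<bar>m\<bar> * \<eta>" using \<eta>0 by simp
        then have "\<eta> * \<bar>m\<bar> \<le> \<eta> * \<bar>m\<bar> * (1 + \<eta>)" by (simp add: algebra_simps)
        then show ?thesis using \<eta>0 by (simp add: pos_divide_le_eq)
      qed
      also have "\<dots> \<le> \<eta> * B0" using mB \<eta>0 by (intro mult_left_mono) auto
      finally have "m - m / (1 + \<eta>) \<le> \<eta> * B0" .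
      moreover have "m \<ge> C - \<delta>" using PC unfolding m_def by linarith
      ultimately show ?thesis by linarith
    qed
    have s3: "(\<delta> + \<eta> * B0) / real a \<le> \<epsilon> / 2"
    proof -
      have "\<eta> * B0 \<le> \<epsilon> * real a / 4" using \<eta>0(3) B0 by (simp add: pos_le_divide_eq ac_simps)
      then have "\<delta> + \<eta> * B0 \<le> \<epsilon> / 2 * real a" using \<delta>0 by linarith
      then show ?thesis using ra by (simp add: pos_divide_le_eq)
    qed
    show "\<forall>\<^sub>F X in at_top. norm (real (card (AS X)) - Cconst d / real a * X) \<le> \<epsilon> * norm X"
      using eventually_ge_at_top[of "max 1 (16 * real a * real Q / \<epsilon>)"]
    proof eventually_elim
      case (elim X)
      have X: "X > 0" "X \<ge> 1" using elim by auto
      have aQ: "2 * real a * real Q \<le> \<epsilon> * X / 8"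
        using elim \<epsilon> by (simp add: pos_divide_le_eq mult.commute)
      define Bd where "Bd = {n\<in>{1..nat \<lfloor>K * X\<rfloor>}. 1 + \<eta> < EE P n}"
      define Tl where "Tl = {n. 1 \<le> n \<and> K * X < real n \<and> real n < X * EE 2 n}"
      have finBd: "finite Bd" unfolding Bd_def by simp
      have finTl: "finite Tl" unfolding Tl_def using tail_bound[OF K0 X(1)] by simp
      have cTl: "real (card Tl) \<le> \<epsilon> * X / 4"
        using tail_bound(2)[OF K0 X(1)] unfolding Tl_def K_def using \<epsilon> by (simp add: field_simps)
      have cBd: "real (card Bd) \<le> \<epsilon> * X / 8"
      proof -
        have "real (card Bd) \<le> K * X * (exp (4 / (real P - 1)) - 1) / (2 * \<eta>)"
          unfolding Bd_def using bad_bound[OF P2 \<eta>0(1), of "K * X"] K0 X by simp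
        also have "\<dots> \<le> K * X * \<theta> / (2 * \<eta>)"
          using Pe K0 X \<eta>0 by (intro divide_right_mono mult_left_mono) auto
        also have "\<dots> = \<epsilon> * X / 8" unfolding \<theta>_def using K0 \<eta>0 by (simp add: field_simps)
        finally show ?thesis .
      qed
      have Y1: "(1 + \<eta>) * X \<ge> 0" and Y2: "X / (1 + \<eta>) \<ge> 0" using X \<eta>0 by auto
      note MUp = main_count[OF a ha r' Y1, of P] and MLo = main_count[OF a ha r' Y2, of P]
      have inclU: "AS X \<subseteq> MS d P a r' ((1 + \<eta>) * X) \<union> Bd \<union> Tl"
        unfolding AS_def Bd_def Tl_def by (rule upper_incl[OF d \<eta>0(1) X(1)])
      have inclL: "MS d P a r' (X / (1 + \<eta>)) \<subseteq> AS X \<union> Bd \<union> Tl"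
        unfolding AS_def Bd_def Tl_def by (rule lower_incl[OF d \<eta>0(1) X(1)])
      have finAS: "finite (AS X)" using inclU MUp(1) finBd finTl finite_subset by blast
      have cU: "card (AS X) \<le> card (MS d P a r' ((1 + \<eta>) * X)) + card Bd + card Tl"
      proof -
        have "card (AS X) \<le> card (MS d P a r' ((1 + \<eta>) * X) \<union> Bd \<union> Tl)"
          using inclU MUp(1) finBd finTl by (intro card_mono) auto
        also have "\<dots> \<le> card (MS d P a r' ((1 + \<eta>) * X)) + card Bd + card Tl"
          by (meson add_le_mono card_Un_le le_trans order_refl)
        finally show ?thesis .
      qed
      have cL: "card (MS d P a r' (X / (1 + \<eta>))) \<le> card (AS X) + card Bd + card Tl"
      proof -
        have "card (MS d P a r' (X / (1 + \<eta>))) \<le> card (AS X \<union> Bd \<union> Tl)"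
          using inclL finAS finBd finTl by (intro card_mono) auto
        also have "\<dots> \<le> card (AS X) + card Bd + card Tl"
          by (meson add_le_mono card_Un_le le_trans order_refl)
        finally show ?thesis .
      qed
      have rU: "real (card (AS X)) \<le> real (card (MS d P a r' ((1 + \<eta>) * X))) + real (card Bd) + real (card Tl)"
        using cU by (metis of_nat_add of_nat_le_iff)
      have rL: "real (card (MS d P a r' (X / (1 + \<eta>)))) \<le> real (card (AS X)) + real (card Bd) + real (card Tl)"
        using cL by (metis of_nat_add of_nat_le_iff)
      have mU: "real (card (MS d P a r' ((1 + \<eta>) * X))) \<le> (1 + \<eta>) * X * m / real a + 2 * real a * real Q"
        using MUp(2) unfolding m_def Q_def by linarith
      have mL: "real (card (MS d P a r' (X / (1 + \<eta>)))) \<ge> X / (1 + \<eta>) * m / real a - 2 * real a * real Q"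
        using MLo(2) unfolding m_def Q_def by linarith
      have eU: "(1 + \<eta>) * X * m / real a \<le> C / real a * X + \<epsilon> / 2 * X"
      proof -
        have "(1 + \<eta>) * X * m / real a = X * (((1 + \<eta>) * m) / real a)" by simp
        also have "\<dots> \<le> X * ((C + (\<delta> + \<eta> * B0)) / real a)"
          using s1 X ra by (intro mult_left_mono divide_right_mono) auto
        also have "\<dots> = C / real a * X + X * ((\<delta> + \<eta> * B0) / real a)" using ra by (simp add: field_simps)
        also have "\<dots> \<le> C / real a * X + X * (\<epsilon> / 2)" using s3 X by (intro add_left_mono mult_left_mono) auto
        finally show ?thesis by (simp add: mult.commute)
      qed
      have eL: "X / (1 + \<eta>) * m / real a \<ge> C / real a * X - \<epsilon> / 2 * X"
      proof -
        have "X / (1 + \<eta>) * m / real a = X * ((m / (1 + \<eta>)) / real a)" by simp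
        also have "\<dots> \<ge> X * ((C - (\<delta> + \<eta> * B0)) / real a)"
          using s2 X ra by (intro mult_left_mono divide_right_mono) auto
        also have "X * ((C - (\<delta> + \<eta> * B0)) / real a) = C / real a * X - X * ((\<delta> + \<eta> * B0) / real a)"
          using ra by (simp add: field_simps)
        also have "\<dots> \<ge> C / real a * X - X * (\<epsilon> / 2)" using s3 X by (intro diff_left_mono mult_left_mono) auto
        finally show ?thesis by (simp add: mult.commute)
      qed
      have "\<bar>real (card (AS X)) - C / real a * X\<bar> \<le> \<epsilon> * X"
        using rU rL mU mL eU eL cBd cTl aQ by (simp add: abs_le_iff)
      then show ?case using X unfolding C_def by simp
    qed
  qed
qed

end
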